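(* Let $p>1$ and $x\in(0,1)$. The functions $k\mapsto(\arcsin_p(x^k))^{1/k}$ and $k\mapsto(\operatorname{artanh}_p(x^k))^{1/k}$ are decreasing on $(0,\infty)$, and the functions $k\mapsto(\arctan_p(x^k))^{1/k}$ and $k\mapsto(\operatorname{arsinh}_p(x^k))^{1/k}$ are increasing on $(0,\infty)$. In particular, for $k\ge1$, $$\sqrt[k]{\arcsin_p(x^k)}\le\arcsin_p(x)\le(\arcsin_p\sqrt[k]{x})^k,\qquad \sqrt[k]{\operatorname{artanh}_p(x^k)}\le\operatorname{artanh}_p(x)\le(\operatorname{artanh}_p\sqrt[k]{x})^k,$$ $$(\operatorname{arsinh}_p\sqrt[k]{x})^k\le\operatorname{arsinh}_p(x)\le\sqrt[k]{\operatorname{arsinh}_p(x^k)},\qquad (\arctan_p\sqrt[k]{x})^k\le\arctan_p(x)\le\sqrt[k]{\arctan_p(x^k)}.$$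
   Context: For $p>1$ and $y\in(0,1)$: $\arcsin_p y=\int_0^y(1-t^p)^{-1/p}dt$, $\arctan_p y=\int_0^y(1+t^p)^{-1}dt$, $\operatorname{arsinh}_p y=\int_0^y(1+t^p)^{-1/p}dt$, $\operatorname{artanh}_p y=\int_0^y(1-t^p)^{-1}dt$. *)

theory Defs
  imports "HOL-Analysis.Analysis"
begin

definition arcsin_p :: "real \<Rightarrow> real \<Rightarrow> real" where
  "arcsin_p p y = integral {0..y} (\<lambda>t. (1 - t powr p) powr (-1/p))"

definition arctan_p :: "real \<Rightarrow> real \<Rightarrow> real" where
  "arctan_p p y = integral {0..y} (\<lambda>t. 1 / (1 + t powr p))"

definition arsinh_p :: "real \<Rightarrow> real \<Rightarrow> real" where
  "arsinh_p p y = integral {0..y} (\<lambda>t. (1 + t powr p) powr (-1/p))"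

definition artanh_p :: "real \<Rightarrow> real \<Rightarrow> real" where
  "artanh_p p y = integral {0..y} (\<lambda>t. 1 / (1 - t powr p))"

end

theory Submission
  imports Defs
begin

lemma mean_mono:
  fixes g :: "real \<Rightarrow> real"
  assumes int: "\<And>y. 0 \<le> y \<Longrightarrow> y < 1 \<Longrightarrow> g integrable_on {0..y}"
    and mono: "\<And>s t. 0 \<le> s \<Longrightarrow> s \<le> t \<Longrightarrow> t < 1 \<Longrightarrow> g s \<le> g t"
    and ab: "0 < a" "a \<le> b" "b < 1"
  shows "integral {0..a} g / a \<le> integral {0..b} g / b"
proof -
  have ib: "g integrable_on {0..b}" using int ab by auto
  have ia: "g integrable_on {0..a}" using int ab by auto
  have iab: "g integrable_on {a..b}" using ib ab by (auto intro: integrable_subinterval_real)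
  have comb: "integral {0..a} g + integral {a..b} g = integral {0..b} g"
    using Henstock_Kurzweil_Integration.integral_combine[OF _ _ ib, of a] ab by auto
  have Fa: "integral {0..a} g \<le> a * g a"
  proof -
    have "integral {0..a} g \<le> integral {0..a} (\<lambda>_. g a)"
      by (rule integral_le[OF ia]) (use ab mono in auto)
    thus ?thesis using ab by simp
  qed
  have Gab: "(b - a) * g a \<le> integral {a..b} g"
  proof -
    have "integral {a..b} (\<lambda>_. g a) \<le> integral {a..b} g"
      by (rule integral_le[OF _ iab]) (use ab mono in auto)
    thus ?thesis using ab by (simp add: mult.commute)
  qed
  have "(b - a) * integral {0..a} g \<le> (b - a) * (a * g a)"
    using Fa ab by (intro mult_left_mono) auto
  hence "integral {0..a} g * b \<le> integral {0..b} g * a"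
  proof -
    have "a * ((b - a) * g a) \<le> a * integral {a..b} g" using Gab ab by (intro mult_left_mono) auto
    moreover have "a * ((b - a) * g a) = (b - a) * (a * g a)" by simp
    ultimately have "(b - a) * integral {0..a} g \<le> a * integral {a..b} g"
      using \<open>(b - a) * integral {0..a} g \<le> (b - a) * (a * g a)\<close> by linarith
    hence "integral {0..a} g * b \<le> a * integral {0..a} g + a * integral {a..b} g"
      by (simp add: algebra_simps)
    also have "\<dots> = integral {0..b} g * a" using comb by (metis distrib_left mult.commute)
    finally show ?thesis .
  qed
  thus ?thesis using ab by (simp add: divide_simps)
qed

lemma lower_bound:
  fixes g :: "real \<Rightarrow> real"
  assumes int: "\<And>y. 0 \<le> y \<Longrightarrow> y < 1 \<Longrightarrow> g integrable_on {0..y}"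
    and mono: "\<And>s t. 0 \<le> s \<Longrightarrow> s \<le> t \<Longrightarrow> t < 1 \<Longrightarrow> g s \<le> g t"
    and y: "0 < y" "y < 1"
  shows "y * g 0 \<le> integral {0..y} g"
proof -
  have "integral {0..y} (\<lambda>_. g 0) \<le> integral {0..y} g"
    by (rule integral_le[OF _ int]) (use y mono in auto)
  thus ?thesis using y by (simp add: mult.commute)
qed

lemma pow_inc:
  fixes F :: "real \<Rightarrow> real"
  assumes Fge: "\<And>y. 0 < y \<Longrightarrow> y < 1 \<Longrightarrow> y \<le> F y"
    and M: "\<And>a b. 0 < a \<Longrightarrow> a \<le> b \<Longrightarrow> b < 1 \<Longrightarrow> F a / a \<le> F b / b"
    and x: "0 < x" "x < 1" and k: "0 < k1" "k1 \<le> k2"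
  shows "F (x powr k2) powr (1/k2) \<le> F (x powr k1) powr (1/k1)"
proof -
  have eq: "F (x powr k) powr (1/k) = x * (F (x powr k) / x powr k) powr (1/k)"
    and yb: "0 < x powr k" "x powr k < 1" "1 \<le> F (x powr k) / x powr k" if "0 < k" for k
  proof -
    show y0: "0 < x powr k" using x by simp
    show y1: "x powr k < 1" using x that by (simp add: powr01_less_one)
    have Fg: "x powr k \<le> F (x powr k)" using Fge y0 y1 .
    thus "1 \<le> F (x powr k) / x powr k" using y0 by simp
    have "F (x powr k) = x powr k * (F (x powr k) / x powr k)" using y0 by simp
    hence "F (x powr k) powr (1/k) = (x powr k) powr (1/k) * (F (x powr k) / x powr k) powr (1/k)"
      by (metis powr_mult less_imp_le y0 Fg order_trans divide_nonneg_nonneg)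
    also have "(x powr k) powr (1/k) = x" using that x by (simp add: powr_powr)
    finally show "F (x powr k) powr (1/k) = x * (F (x powr k) / x powr k) powr (1/k)" .
  qed
  have k2: "0 < k2" using k by simp
  have le: "x powr k2 \<le> x powr k1" using x k by (intro powr_mono') auto
  have MM: "F (x powr k2) / x powr k2 \<le> F (x powr k1) / x powr k1"
    using M[OF yb(1)[OF k2] le yb(2)[OF k(1)]] .
  have "(F (x powr k2) / x powr k2) powr (1/k2) \<le> (F (x powr k2) / x powr k2) powr (1/k1)"
    using yb(3)[OF k2] k by (intro powr_mono) (auto simp: divide_simps)
  also have "\<dots> \<le> (F (x powr k1) / x powr k1) powr (1/k1)"
    using MM yb(3)[OF k2] k by (intro powr_mono2) auto
  finally show ?thesis using eq[OF k2] eq[OF k(1)] x by (simp add: mult_left_mono)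
qed

lemma pow_dec:
  fixes F :: "real \<Rightarrow> real"
  assumes Fle: "\<And>y. 0 < y \<Longrightarrow> y < 1 \<Longrightarrow> F y \<le> y"
    and F0: "\<And>y. 0 < y \<Longrightarrow> y < 1 \<Longrightarrow> 0 \<le> F y"
    and M: "\<And>a b. 0 < a \<Longrightarrow> a \<le> b \<Longrightarrow> b < 1 \<Longrightarrow> F b / b \<le> F a / a"
    and x: "0 < x" "x < 1" and k: "0 < k1" "k1 \<le> k2"
  shows "F (x powr k1) powr (1/k1) \<le> F (x powr k2) powr (1/k2)"
proof -
  have eq: "F (x powr k) powr (1/k) = x * (F (x powr k) / x powr k) powr (1/k)"
    and yb: "0 < x powr k" "x powr k < 1" "F (x powr k) / x powr k \<le> 1"
      "0 \<le> F (x powr k) / x powr k" if "0 < k" for k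
  proof -
    show y0: "0 < x powr k" using x by simp
    show y1: "x powr k < 1" using x that by (simp add: powr01_less_one)
    have Fg: "F (x powr k) \<le> x powr k" using Fle y0 y1 .
    thus "F (x powr k) / x powr k \<le> 1" using y0 by simp
    have F0': "0 \<le> F (x powr k)" using F0 y0 y1 .
    thus "0 \<le> F (x powr k) / x powr k" using y0 by simp
    have "F (x powr k) = x powr k * (F (x powr k) / x powr k)" using y0 by simp
    hence "F (x powr k) powr (1/k) = (x powr k) powr (1/k) * (F (x powr k) / x powr k) powr (1/k)"
      by (metis powr_mult less_imp_le y0 F0' divide_nonneg_nonneg)
    also have "(x powr k) powr (1/k) = x" using that x by (simp add: powr_powr)
    finally show "F (x powr k) powr (1/k) = x * (F (x powr k) / x powr k) powr (1/k)" .
  qed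
  have k2: "0 < k2" using k by simp
  have le: "x powr k2 \<le> x powr k1" using x k by (intro powr_mono') auto
  have MM: "F (x powr k1) / x powr k1 \<le> F (x powr k2) / x powr k2"
    using M[OF yb(1)[OF k2] le yb(2)[OF k(1)]] .
  have "(F (x powr k1) / x powr k1) powr (1/k1) \<le> (F (x powr k2) / x powr k2) powr (1/k1)"
    using MM yb(4)[OF k(1)] k by (intro powr_mono2) auto
  also have "\<dots> \<le> (F (x powr k2) / x powr k2) powr (1/k2)"
    using yb(3,4)[OF k2] k by (intro powr_mono') (auto simp: divide_simps)
  finally show ?thesis using eq[OF k2] eq[OF k(1)] x by (simp add: mult_left_mono)
qed

lemma pack_inc:
  fixes g :: "real \<Rightarrow> real"
  assumes int: "\<And>y. 0 \<le> y \<Longrightarrow> y < 1 \<Longrightarrow> g integrable_on {0..y}"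
    and mono: "\<And>s t. 0 \<le> s \<Longrightarrow> s \<le> t \<Longrightarrow> t < 1 \<Longrightarrow> g s \<le> g t"
    and g0: "g 0 = 1" and x: "0 < x" "x < 1"
  shows "antimono_on {0<..} (\<lambda>k. (integral {0..x powr k} g) powr (1/k))
    \<and> (\<forall>k::real. k \<ge> 1 \<longrightarrow> (integral {0..x powr k} g) powr (1/k) \<le> integral {0..x} g
         \<and> integral {0..x} g \<le> (integral {0..x powr (1/k)} g) powr k)"
proof -
  let ?F = "\<lambda>y. integral {0..y} g"
  have P: "?F (x powr k2) powr (1/k2) \<le> ?F (x powr k1) powr (1/k1)" if "0 < k1" "k1 \<le> k2" for k1 k2
    by (rule pow_inc[OF _ _ x that]) (use lower_bound[OF int mono] mean_mono[OF int mono] g0 in auto)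
  have F0: "0 \<le> ?F x" using lower_bound[OF int mono, of x] g0 x by simp
  have V1: "?F (x powr 1) powr (1/1) = ?F x" using x F0 by simp
  show ?thesis
  proof (intro conjI allI impI)
    show "antimono_on {0<..} (\<lambda>k. ?F (x powr k) powr (1/k))"
      unfolding monotone_on_def using P by auto
  next
    fix k :: real assume "1 \<le> k"
    show "?F (x powr k) powr (1/k) \<le> ?F x" using P[of 1 k] V1 \<open>1 \<le> k\<close> by simp
    have "?F (x powr 1) powr (1/1) \<le> ?F (x powr (1/k)) powr (1/(1/k))"
      using P[of "1/k" 1] \<open>1 \<le> k\<close> by simp
    thus "?F x \<le> ?F (x powr (1/k)) powr k" using V1 by simp
  qed
qed

lemma pack_dec:
  fixes g :: "real \<Rightarrow> real"
  assumes int: "\<And>y. 0 \<le> y \<Longrightarrow> y < 1 \<Longrightarrow> g integrable_on {0..y}"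
    and mono: "\<And>s t. 0 \<le> s \<Longrightarrow> s \<le> t \<Longrightarrow> t < 1 \<Longrightarrow> g t \<le> g s"
    and pos: "\<And>t. 0 \<le> t \<Longrightarrow> t < 1 \<Longrightarrow> 0 \<le> g t"
    and g0: "g 0 = 1" and x: "0 < x" "x < 1"
  shows "mono_on {0<..} (\<lambda>k. (integral {0..x powr k} g) powr (1/k))
    \<and> (\<forall>k::real. k \<ge> 1 \<longrightarrow> (integral {0..x powr (1/k)} g) powr k \<le> integral {0..x} g
         \<and> integral {0..x} g \<le> (integral {0..x powr k} g) powr (1/k))"
proof -
  let ?F = "\<lambda>y. integral {0..y} g"
  have int': "\<And>y. 0 \<le> y \<Longrightarrow> y < 1 \<Longrightarrow> (\<lambda>t. - g t) integrable_on {0..y}"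
    using int by (simp add: integrable_neg)
  have mono': "\<And>s t. 0 \<le> s \<Longrightarrow> s \<le> t \<Longrightarrow> t < 1 \<Longrightarrow> - g s \<le> - g t"
    using mono by simp
  have Fle: "?F y \<le> y" if "0 < y" "y < 1" for y
    using lower_bound[OF int' mono' that] g0 by (simp add: integral_neg)
  have Fnn: "0 \<le> ?F y" if "0 < y" "y < 1" for y
    using that by (intro integral_nonneg int pos) auto
  have MM: "?F b / b \<le> ?F a / a" if "0 < a" "a \<le> b" "b < 1" for a b
    using mean_mono[OF int' mono' that] by (simp add: integral_neg)
  have P: "?F (x powr k1) powr (1/k1) \<le> ?F (x powr k2) powr (1/k2)" if "0 < k1" "k1 \<le> k2" for k1 k2
    by (rule pow_dec[OF _ _ _ x that]) (use Fle Fnn MM in auto)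
  have F0: "0 \<le> ?F x" using Fnn x by simp
  have V1: "?F (x powr 1) powr (1/1) = ?F x" using x F0 by simp
  show ?thesis
  proof (intro conjI allI impI)
    show "mono_on {0<..} (\<lambda>k. ?F (x powr k) powr (1/k))"
      unfolding monotone_on_def using P by auto
  next
    fix k :: real assume "1 \<le> k"
    show "?F x \<le> ?F (x powr k) powr (1/k)" using P[of 1 k] V1 \<open>1 \<le> k\<close> by simp
    have "?F (x powr (1/k)) powr (1/(1/k)) \<le> ?F (x powr 1) powr (1/1)"
      using P[of "1/k" 1] \<open>1 \<le> k\<close> by simp
    thus "?F (x powr (1/k)) powr k \<le> ?F x" using V1 by simp
  qed
qed

lemma tp_cont: "0 < (p::real) \<Longrightarrow> continuous_on {0..y} (\<lambda>t::real. t powr p)"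
  by (rule continuous_on_powr') (auto intro: continuous_intros)

lemma tp_lt1: "0 < (p::real) \<Longrightarrow> 0 \<le> t \<Longrightarrow> t < 1 \<Longrightarrow> t powr p < 1"
  by (cases "t = 0") (auto simp: powr01_less_one)

lemma tp_mono: "0 < (p::real) \<Longrightarrow> 0 \<le> s \<Longrightarrow> s \<le> t \<Longrightarrow> s powr p \<le> t powr p"
  by (rule powr_mono2) auto

lemma g_arcsin:
  assumes "p > (1::real)"
  shows "\<And>y. 0 \<le> y \<Longrightarrow> y < 1 \<Longrightarrow> (\<lambda>t. (1 - t powr p) powr (-1/p)) integrable_on {0..y}"
    and "\<And>s t. 0 \<le> s \<Longrightarrow> s \<le> t \<Longrightarrow> t < 1 \<Longrightarrow> (1 - s powr p) powr (-1/p) \<le> (1 - t powr p) powr (-1/p)"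
    and "(\<lambda>t. (1 - t powr p) powr (-1/p)) 0 = 1"
proof -
  have p: "0 < p" using assms by simp
  fix y :: real assume y: "0 \<le> y" "y < 1"
  show "(\<lambda>t. (1 - t powr p) powr (-1/p)) integrable_on {0..y}"
  proof (rule integrable_continuous_real, rule continuous_on_powr)
    show "continuous_on {0..y} (\<lambda>t. 1 - t powr p)" by (intro continuous_on_diff continuous_on_add continuous_on_const tp_cont p)
    show "\<forall>t\<in>{0..y}. 1 - t powr p \<noteq> 0" using tp_lt1[OF p] y by fastforce
  qed (auto intro: continuous_intros)
next
  have p: "0 < p" using assms by simp
  fix s t :: real assume st: "0 \<le> s" "s \<le> t" "t < 1"
  show "(1 - s powr p) powr (-1/p) \<le> (1 - t powr p) powr (-1/p)"
    using tp_lt1[OF p, of t] tp_mono[OF p st(1,2)] st p by (intro powr_mono2') auto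
next
  show "(\<lambda>t. (1 - t powr p) powr (-1/p)) 0 = 1" using assms by simp
qed

lemma g_artanh:
  assumes "p > (1::real)"
  shows "\<And>y. 0 \<le> y \<Longrightarrow> y < 1 \<Longrightarrow> (\<lambda>t. 1 / (1 - t powr p)) integrable_on {0..y}"
    and "\<And>s t. 0 \<le> s \<Longrightarrow> s \<le> t \<Longrightarrow> t < 1 \<Longrightarrow> 1 / (1 - s powr p) \<le> 1 / (1 - t powr p)"
    and "(\<lambda>t. 1 / (1 - t powr p)) 0 = 1"
proof -
  have p: "0 < p" using assms by simp
  fix y :: real assume y: "0 \<le> y" "y < 1"
  show "(\<lambda>t. 1 / (1 - t powr p)) integrable_on {0..y}"
  proof (rule integrable_continuous_real, rule continuous_on_divide)
    show "continuous_on {0..y} (\<lambda>t. 1 - t powr p)" by (intro continuous_on_diff continuous_on_add continuous_on_const tp_cont p)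
    show "\<forall>t\<in>{0..y}. 1 - t powr p \<noteq> 0" using tp_lt1[OF p] y by fastforce
  qed (auto intro: continuous_intros)
next
  have p: "0 < p" using assms by simp
  fix s t :: real assume st: "0 \<le> s" "s \<le> t" "t < 1"
  show "1 / (1 - s powr p) \<le> 1 / (1 - t powr p)"
    using tp_lt1[OF p, of t] tp_mono[OF p st(1,2)] st p by (intro divide_left_mono mult_pos_pos) auto
next
  show "(\<lambda>t. 1 / (1 - t powr p)) 0 = 1" using assms by simp
qed

lemma g_arctan:
  assumes "p > (1::real)"
  shows "\<And>y. 0 \<le> y \<Longrightarrow> y < 1 \<Longrightarrow> (\<lambda>t. 1 / (1 + t powr p)) integrable_on {0..y}"
    and "\<And>s t. 0 \<le> s \<Longrightarrow> s \<le> t \<Longrightarrow> t < 1 \<Longrightarrow> 1 / (1 + t powr p) \<le> 1 / (1 + s powr p)"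
    and "\<And>t. 0 \<le> t \<Longrightarrow> t < 1 \<Longrightarrow> 0 \<le> 1 / (1 + t powr p)"
    and "(\<lambda>t. 1 / (1 + t powr p)) 0 = 1"
proof -
  have p: "0 < p" using assms by simp
  fix y :: real assume y: "0 \<le> y" "y < 1"
  show "(\<lambda>t. 1 / (1 + t powr p)) integrable_on {0..y}"
  proof (rule integrable_continuous_real, rule continuous_on_divide)
    show "continuous_on {0..y} (\<lambda>t. 1 + t powr p)" by (intro continuous_on_diff continuous_on_add continuous_on_const tp_cont p)
    show "\<forall>t\<in>{0..y}. 1 + t powr p \<noteq> 0"
      using powr_ge_zero by (smt (verit))
  qed (auto intro: continuous_intros)
next
  have p: "0 < p" using assms by simp
  fix s t :: real assume st: "0 \<le> s" "s \<le> t" "t < 1"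
  show "1 / (1 + t powr p) \<le> 1 / (1 + s powr p)"
    using tp_mono[OF p st(1,2)] by (intro divide_left_mono mult_pos_pos) (auto intro: add_pos_nonneg)
next
  fix t :: real
  show "0 \<le> 1 / (1 + t powr p)" by (simp add: add_nonneg_nonneg)
next
  show "(\<lambda>t. 1 / (1 + t powr p)) 0 = 1" using assms by simp
qed

lemma g_arsinh:
  assumes "p > (1::real)"
  shows "\<And>y. 0 \<le> y \<Longrightarrow> y < 1 \<Longrightarrow> (\<lambda>t. (1 + t powr p) powr (-1/p)) integrable_on {0..y}"
    and "\<And>s t. 0 \<le> s \<Longrightarrow> s \<le> t \<Longrightarrow> t < 1 \<Longrightarrow> (1 + t powr p) powr (-1/p) \<le> (1 + s powr p) powr (-1/p)"
    and "\<And>t. 0 \<le> t \<Longrightarrow> t < 1 \<Longrightarrow> 0 \<le> (1 + t powr p) powr (-1/p)"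
    and "(\<lambda>t. (1 + t powr p) powr (-1/p)) 0 = 1"
proof -
  have p: "0 < p" using assms by simp
  fix y :: real assume y: "0 \<le> y" "y < 1"
  show "(\<lambda>t. (1 + t powr p) powr (-1/p)) integrable_on {0..y}"
  proof (rule integrable_continuous_real, rule continuous_on_powr)
    show "continuous_on {0..y} (\<lambda>t. 1 + t powr p)" by (intro continuous_on_diff continuous_on_add continuous_on_const tp_cont p)
    show "\<forall>t\<in>{0..y}. 1 + t powr p \<noteq> 0"
      using powr_ge_zero by (smt (verit))
  qed (auto intro: continuous_intros)
next
  have p: "0 < p" using assms by simp
  fix s t :: real assume st: "0 \<le> s" "s \<le> t" "t < 1"
  show "(1 + t powr p) powr (-1/p) \<le> (1 + s powr p) powr (-1/p)"
    using tp_mono[OF p st(1,2)] p by (intro powr_mono2') (auto intro: add_pos_nonneg)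
next
  fix t :: real
  show "0 \<le> (1 + t powr p) powr (-1/p)" by simp
next
  show "(\<lambda>t. (1 + t powr p) powr (-1/p)) 0 = 1" using assms by simp
qed

theorem lemma2p4:
  fixes p x :: real
  assumes "p > 1" and "0 < x" and "x < 1"
  shows "antimono_on {0<..} (\<lambda>k. (arcsin_p p (x powr k)) powr (1/k))
       \<and> antimono_on {0<..} (\<lambda>k. (artanh_p p (x powr k)) powr (1/k))
       \<and> mono_on {0<..} (\<lambda>k. (arctan_p p (x powr k)) powr (1/k))
       \<and> mono_on {0<..} (\<lambda>k. (arsinh_p p (x powr k)) powr (1/k))
       \<and> (\<forall>k::real. k \<ge> 1 \<longrightarrow>
            (arcsin_p p (x powr k)) powr (1/k) \<le> arcsin_p p x
          \<and> arcsin_p p x \<le> (arcsin_p p (x powr (1/k))) powr k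
          \<and> (artanh_p p (x powr k)) powr (1/k) \<le> artanh_p p x
          \<and> artanh_p p x \<le> (artanh_p p (x powr (1/k))) powr k
          \<and> (arsinh_p p (x powr (1/k))) powr k \<le> arsinh_p p x
          \<and> arsinh_p p x \<le> (arsinh_p p (x powr k)) powr (1/k)
          \<and> (arctan_p p (x powr (1/k))) powr k \<le> arctan_p p x
          \<and> arctan_p p x \<le> (arctan_p p (x powr k)) powr (1/k))"
proof -
  note A = pack_inc[OF g_arcsin[OF assms(1)] assms(2,3)]
  note B = pack_inc[OF g_artanh[OF assms(1)] assms(2,3)]
  note C = pack_dec[OF g_arctan[OF assms(1)] assms(2,3)]
  note D = pack_dec[OF g_arsinh[OF assms(1)] assms(2,3)]
  show ?thesis unfolding arcsin_p_def artanh_p_def arctan_p_def arsinh_p_def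
    using A B C D by blast
qed

end
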